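(* For any time warp $f$ and $n\in\omega\setminus\{0\}$: $f^{o}(n)=0\iff f(n)<\omega$; $f^{o}(n)=\omega\iff f(n)=\omega$; $f^{o}(\omega)=0\iff f(k)<\omega$ for all $k\in\omega$; $f^{o}(\omega)=\omega\iff f(k)=\omega$ for some $k\in\omega$.
   Context: Let $\overline{\omega}=\omega\cup\{\omega\}$ be the natural numbers with a top element $\omega$ adjoined, with its natural total order. A time warp is a monotone map $f\colon\overline{\omega}\to\overline{\omega}$ with $f(0)=0$ and $f(\omega)=\bigvee\{f(n)\mid n\in\omega\}$. The set $W$ of time warps is ordered pointwise and $fg:=f\circ g$; $\top$ maps every $p\ne0$ to $\omega$ and $0$ to $0$. The left residual $\backslash$ is the binary operation on $W$ with $g\le f\backslash h\iff fg\le h$ for all $f,g,h\in W$. Define $f^{o}:=\top\backslash f$. *)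

theory Defs
  imports Main "HOL-Library.Extended_Nat"
begin

text \<open>The ordered set omega-bar is modelled by enat (infinity = omega).\<close>

definition time_warp :: "(enat \<Rightarrow> enat) \<Rightarrow> bool" where
  "time_warp f \<longleftrightarrow> mono f \<and> f 0 = 0 \<and> f \<infinity> = (SUP n::nat. f (enat n))"

definition top_warp :: "enat \<Rightarrow> enat" where
  "top_warp p = (if p = 0 then 0 else \<infinity>)"

text \<open>Left residual: f\h is the greatest time warp g (pointwise order) with f o g <= h,
  i.e. the operation on W characterised by g <= f\h iff fg <= h.\<close>
definition resid :: "(enat \<Rightarrow> enat) \<Rightarrow> (enat \<Rightarrow> enat) \<Rightarrow> (enat \<Rightarrow> enat)" where
  "resid f h = (GREATEST g. time_warp g \<and> f \<circ> g \<le> h)"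

definition opp :: "(enat \<Rightarrow> enat) \<Rightarrow> (enat \<Rightarrow> enat)" where
  "opp f = resid top_warp f"

end

theory Submission
  imports Defs
begin

definition G :: "(enat \<Rightarrow> enat) \<Rightarrow> enat \<Rightarrow> enat" where
  "G f p = (if \<exists>k::nat. enat k \<le> p \<and> f (enat k) = \<infinity> then \<infinity> else 0)"

lemma G_tw:
  assumes tw: "time_warp f"
  shows "time_warp (G f)"
proof -
  have m: "mono f" and f0: "f 0 = 0" using tw unfolding time_warp_def by auto
  have "mono (G f)"
    unfolding mono_def G_def by (auto intro: order_trans)
  moreover have "G f 0 = 0"
    unfolding G_def using f0 by (auto simp: zero_enat_def)
  moreover have "G f \<infinity> = (SUP n::nat. G f (enat n))"
  proof (cases "\<exists>k::nat. f (enat k) = \<infinity>")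
    case True
    then obtain k where k: "f (enat k) = \<infinity>" by blast
    have "G f (enat k) = \<infinity>" unfolding G_def using k by auto
    hence "(SUP n::nat. G f (enat n)) = \<infinity>"
      by (metis UNIV_I SUP_upper top_enat_def top.extremum_uniqueI)
    moreover have "G f \<infinity> = \<infinity>" unfolding G_def using k by auto
    ultimately show ?thesis by simp
  next
    case False
    hence "\<And>n. G f (enat n) = 0" "G f \<infinity> = 0" unfolding G_def by auto
    thus ?thesis by simp
  qed
  ultimately show ?thesis unfolding time_warp_def by blast
qed

lemma opp_eq:
  assumes tw: "time_warp f"
  shows "opp f = G f"
  unfolding opp_def resid_def
proof (rule Greatest_equality)
  have m: "mono f" using tw unfolding time_warp_def by auto
  have "top_warp \<circ> G f \<le> f"
  proof (rule le_funI)
    fix p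
    show "(top_warp \<circ> G f) p \<le> f p"
    proof (cases "\<exists>k::nat. enat k \<le> p \<and> f (enat k) = \<infinity>")
      case True
      then obtain k where "enat k \<le> p" "f (enat k) = \<infinity>" by blast
      hence "f p = \<infinity>" using m by (metis monoD enat_ord_simps(5) order.antisym top_enat_def top_greatest)
      thus ?thesis by simp
    next
      case False
      hence "G f p = 0" by (simp add: G_def)
      thus ?thesis by (simp add: top_warp_def)
    qed
  qed
  thus "time_warp (G f) \<and> top_warp \<circ> G f \<le> f" using G_tw[OF tw] by blast
next
  fix y assume y: "time_warp y \<and> top_warp \<circ> y \<le> f"
  have ysup: "y \<infinity> = (SUP n::nat. y (enat n))" using y unfolding time_warp_def by auto
  have yle: "\<And>p. y p \<noteq> 0 \<Longrightarrow> f p = \<infinity>"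
  proof -
    fix p assume "y p \<noteq> 0"
    hence "top_warp (y p) = \<infinity>" by (simp add: top_warp_def)
    moreover have "top_warp (y p) \<le> f p" using y by (auto simp: le_fun_def)
    ultimately show "f p = \<infinity>" by simp
  qed
  show "y \<le> G f"
  proof (rule le_funI)
    fix p
    show "y p \<le> G f p"
    proof (cases "y p = 0")
      case True thus ?thesis by simp
    next
      case False
      show ?thesis
      proof (cases p)
        case (enat n)
        hence "f (enat n) = \<infinity>" using yle[OF False] by simp
        thus ?thesis unfolding G_def using enat by auto
      next
        case infinity
        have "\<exists>n::nat. y (enat n) \<noteq> 0"
        proof (rule ccontr)
          assume "\<not> ?thesis"
          hence "(SUP n::nat. y (enat n)) = 0" by simp
          thus False using False ysup infinity by simp
        qed
        then obtain n where "y (enat n) \<noteq> 0" by blast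
        hence "f (enat n) = \<infinity>" using yle by blast
        hence "\<exists>k::nat. enat k \<le> p \<and> f (enat k) = \<infinity>" using infinity by auto
        hence "G f p = \<infinity>" unfolding G_def by simp
        thus ?thesis by simp
      qed
    qed
  qed
qed

lemma lti: "(x::enat) < \<infinity> \<longleftrightarrow> x \<noteq> \<infinity>" by (cases x) auto

theorem lemma2p5:
  fixes f :: "enat \<Rightarrow> enat" and n :: nat
  assumes "time_warp f" and "n \<noteq> 0"
  shows "(opp f (enat n) = 0 \<longleftrightarrow> f (enat n) < \<infinity>)
    \<and> (opp f (enat n) = \<infinity> \<longleftrightarrow> f (enat n) = \<infinity>)
    \<and> (opp f \<infinity> = 0 \<longleftrightarrow> (\<forall>k::nat. f (enat k) < \<infinity>))
    \<and> (opp f \<infinity> = \<infinity> \<longleftrightarrow> (\<exists>k::nat. f (enat k) = \<infinity>))"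
proof -
  have m: "mono f" using assms unfolding time_warp_def by auto
  have e: "(\<exists>k::nat. enat k \<le> enat n \<and> f (enat k) = \<infinity>) \<longleftrightarrow> f (enat n) = \<infinity>"
  proof
    assume "\<exists>k::nat. enat k \<le> enat n \<and> f (enat k) = \<infinity>"
    then obtain k where "enat k \<le> enat n" "f (enat k) = \<infinity>" by blast
    thus "f (enat n) = \<infinity>" using m by (metis monoD enat_ord_simps(5) order.antisym top_enat_def top_greatest)
  qed auto
  show ?thesis
    unfolding opp_eq[OF assms(1)] G_def using e
    by (auto simp: lti)
qed

end
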